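(* Let $\beta$ be a Pisot number. There exists $N_0=N_0(\beta)\in\mathbb{N}$ such that for every sequence $x_1,x_2,\dots$ of finite words in $X_\beta$ and every $N>N_0$, the infinite concatenation $0^Nx_10^Nx_20^N\cdots$ belongs to $X_\beta$.
   Context: Let $B=\lceil\beta\rceil$ and $T_\beta(x)=\beta x\bmod1$. For $x\in[0,1)$ its greedy $\beta$-expansion is the digit sequence $d_k=\lfloor\beta T_\beta^{k-1}x\rfloor\in\{0,\dots,B-1\}$, $k\ge1$. The $\beta$-shift $X_\beta\subseteq\{0,\dots,B-1\}^{\mathbb{N}}$ is the closure (in the product topology) of the set of greedy $\beta$-expansions of points of $[0,1)$; it is shift-invariant. A finite word is in $X_\beta$ if some element of $X_\beta$ begins with it. $0^N$ denotes the word of $N$ zeros. A Pisot number is an algebraic integer $\beta>1$ whose conjugates have modulus $<1$ (integers $\ge2$ included). *)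

theory Defs
  imports "HOL-Analysis.Analysis" "HOL-Computational_Algebra.Polynomial"
begin

text \<open>Pisot number: an algebraic integer beta > 1 whose conjugates (the other complex roots
  of its minimal polynomial) all have modulus < 1. The minimal polynomial is rendered as a
  monic irreducible integer polynomial vanishing at beta (Gauss: monic irreducible in Z[x]
  is the same as the minimal polynomial over Q).\<close>
definition pisot :: "real \<Rightarrow> bool" where
  "pisot b \<longleftrightarrow> b > 1 \<and>
     (\<exists>p :: int poly. lead_coeff p = 1 \<and> irreducible p \<and>
        poly (map_poly of_int p) b = 0 \<and>
        (\<forall>z::complex. poly (map_poly of_int p) z = 0 \<and> z \<noteq> complex_of_real b \<longrightarrow> cmod z < 1))"

definition beta_T :: "real \<Rightarrow> real \<Rightarrow> real" where
  "beta_T b x = frac (b * x)"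

text \<open>Greedy beta-expansion, 0-indexed: digit k is floor(beta * T^k x)
  (this is d_(k+1) of the paper).\<close>
definition greedy_digits :: "real \<Rightarrow> real \<Rightarrow> nat \<Rightarrow> nat" where
  "greedy_digits b x k = nat \<lfloor>b * (beta_T b ^^ k) x\<rfloor>"

definition beta_shift :: "real \<Rightarrow> (nat \<Rightarrow> nat) set" where
  "beta_shift b = closure (greedy_digits b ` {0..<1})"

definition beta_words :: "real \<Rightarrow> nat list set" where
  "beta_words b = {w. \<exists>s\<in>beta_shift b. \<forall>i<length w. s i = w ! i}"

text \<open>The infinite concatenation 0^N x_0 0^N x_1 0^N ... (for N \<ge> 1 every block is
  nonempty, so the first k+1 blocks have length > k).\<close>
definition zero_sep_concat :: "nat \<Rightarrow> (nat \<Rightarrow> nat list) \<Rightarrow> nat \<Rightarrow> nat" where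
  "zero_sep_concat N xs k = concat (map (\<lambda>i. replicate N 0 @ xs i) [0..<Suc k]) ! k"

end

theory Submission
  imports Defs "Berlekamp_Zassenhaus.Square_Free_Int_To_Square_Free_GFp"
begin


lemma T_eq: "beta_T b x = b * x - of_int \<lfloor>b * x\<rfloor>"
  by (simp add: beta_T_def frac_def)

lemma T_range: "0 \<le> beta_T b x" "beta_T b x < 1"
  by (auto simp: beta_T_def frac_lt_1)

lemma T_le: assumes "0 \<le> x" "0 \<le> b" shows "beta_T b x \<le> b * x"
  using assms by (simp add: T_eq)

lemma Tpow_nonneg: "0 \<le> x \<Longrightarrow> 0 \<le> (beta_T b ^^ m) x"
  by (cases m) (auto simp: T_range)

lemma Tpow_le: assumes "0 \<le> a" "0 \<le> b" shows "(beta_T b ^^ m) a \<le> b ^ m * a"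
proof (induction m)
  case 0 then show ?case by simp
next
  case (Suc m)
  have "(beta_T b ^^ Suc m) a = beta_T b ((beta_T b ^^ m) a)" by simp
  also have "\<dots> \<le> b * (beta_T b ^^ m) a" using T_le Tpow_nonneg assms by blast
  also have "\<dots> \<le> b * (b ^ m * a)" using Suc assms by (simp add: mult_left_mono)
  finally show ?case by simp
qed

lemma phi_bound:
  assumes b: "b > 1" and eta: "\<And>j. (beta_T b ^^ j) 1 > 0 \<Longrightarrow> \<eta> \<le> (beta_T b ^^ j) 1"
  shows "0 \<le> a \<Longrightarrow> a < (beta_T b ^^ j) 1 \<Longrightarrow> \<eta> \<le> b ^ m * ((beta_T b ^^ j) 1 - a) + (beta_T b ^^ m) a"
proof (induction m arbitrary: j a)
  case 0 then show ?case using eta[of j] by simp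
next
  case (Suc m)
  define c where "c = (beta_T b ^^ j) 1"
  have c: "a < c" "0 \<le> a" using Suc.prems c_def by auto
  have cS: "(beta_T b ^^ Suc j) 1 = beta_T b c" by (simp add: c_def)
  have aS: "(beta_T b ^^ Suc m) a = (beta_T b ^^ m) (beta_T b a)" by (simp add: funpow_Suc_right del: funpow.simps)
  have dle: "\<lfloor>b * a\<rfloor> \<le> \<lfloor>b * c\<rfloor>" using c b by (intro floor_mono) simp
  have eq: "b ^ Suc m * (c - a) = b ^ m * (of_int (\<lfloor>b * c\<rfloor> - \<lfloor>b * a\<rfloor>) + beta_T b c - beta_T b a)"
    by (simp add: T_eq algebra_simps)
  have goal_eq: "b ^ Suc m * ((beta_T b ^^ j) 1 - a) + (beta_T b ^^ Suc m) a
     = b ^ m * (of_int (\<lfloor>b * c\<rfloor> - \<lfloor>b * a\<rfloor>) + beta_T b c - beta_T b a) + (beta_T b ^^ m) (beta_T b a)"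
    by (simp only: c_def[symmetric] aS eq)
  have "\<eta> \<le> b ^ m * (of_int (\<lfloor>b * c\<rfloor> - \<lfloor>b * a\<rfloor>) + beta_T b c - beta_T b a) + (beta_T b ^^ m) (beta_T b a)"
  proof (cases "\<lfloor>b * a\<rfloor> < \<lfloor>b * c\<rfloor>")
    case True
    have "\<eta> \<le> b ^ m * ((beta_T b ^^ 0) 1 - beta_T b a) + (beta_T b ^^ m) (beta_T b a)"
      using Suc.IH[of "beta_T b a" 0] T_range by simp
    also have "\<dots> \<le> b ^ m * (of_int (\<lfloor>b * c\<rfloor> - \<lfloor>b * a\<rfloor>) + beta_T b c - beta_T b a) + (beta_T b ^^ m) (beta_T b a)"
    proof -
      have "1 \<le> real_of_int (\<lfloor>b * c\<rfloor> - \<lfloor>b * a\<rfloor>)" using True by linarith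
      hence "1 - beta_T b a \<le> of_int (\<lfloor>b * c\<rfloor> - \<lfloor>b * a\<rfloor>) + beta_T b c - beta_T b a"
        using T_range[of b c] by linarith
      thus ?thesis using b by (simp add: mult_left_mono)
    qed
    finally show ?thesis .
  next
    case False
    hence eqd: "\<lfloor>b * a\<rfloor> = \<lfloor>b * c\<rfloor>" using dle by simp
    have "beta_T b a < beta_T b c" using c b eqd by (simp add: T_eq)
    hence "\<eta> \<le> b ^ m * ((beta_T b ^^ Suc j) 1 - beta_T b a) + (beta_T b ^^ m) (beta_T b a)"
      using Suc.IH[of "beta_T b a" "Suc j"] T_range cS by simp
    thus ?thesis using eqd cS by simp
  qed
  thus ?case using goal_eq by simp
qed

lemma frac_shift: assumes "0 \<le> u" "u < 1" shows "\<lfloor>of_int k + u\<rfloor> = k" "frac (of_int k + (u::real)) = u"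
proof -
  show "\<lfloor>of_int k + u\<rfloor> = k" using assms by linarith
  thus "frac (of_int k + (u::real)) = u" by (simp add: frac_def)
qed

lemma cyl:
  fixes n :: nat
  assumes b: "b > 1" and eta: "\<And>j. (beta_T b ^^ j) 1 > 0 \<Longrightarrow> \<eta> \<le> (beta_T b ^^ j) 1"
    and x: "0 \<le> x" "x < 1" and t: "0 \<le> t" "t < \<eta>"
  defines "y \<equiv> x + (t - (beta_T b ^^ n) x) / b ^ n"
  shows "0 \<le> y" "y < 1" "\<And>j. j < n \<Longrightarrow> greedy_digits b y j = greedy_digits b x j"
    "(beta_T b ^^ n) y = t"
proof -
  define \<delta> where "\<delta> = t - (beta_T b ^^ n) x"
  have Q: "0 \<le> (beta_T b ^^ j) x + \<delta> / b ^ (n - j) \<and> (beta_T b ^^ j) x + \<delta> / b ^ (n - j) < 1"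
    if "j \<le> n" for j
  proof -
    define a where "a = (beta_T b ^^ j) x"
    define m where "m = n - j"
    have a1: "(beta_T b ^^ j) x < 1" by (cases j) (simp_all add: x T_range)
    have a: "0 \<le> a" "a < 1" using x a1 Tpow_nonneg by (auto simp: a_def)
    have nn: "n = m + j" using that by (simp add: m_def)
    have n: "(beta_T b ^^ n) x = (beta_T b ^^ m) a"
      unfolding nn a_def by (simp add: funpow_add)
    have bm: "b ^ m > 0" using b by simp
    have le: "(beta_T b ^^ m) a \<le> b ^ m * a" using Tpow_le a b by simp
    have ph: "\<eta> \<le> b ^ m * ((beta_T b ^^ 0) 1 - a) + (beta_T b ^^ m) a"
      using phi_bound[OF b eta, of a 0 m] a by simp
    have "0 \<le> a + (t - (beta_T b ^^ m) a) / b ^ m"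
    proof -
      have "(beta_T b ^^ m) a / b ^ m \<le> a" using le bm by (simp add: divide_le_eq mult.commute)
      moreover have "0 \<le> t / b ^ m" using t bm by simp
      ultimately show ?thesis by (simp add: diff_divide_distrib)
    qed
    moreover have "a + (t - (beta_T b ^^ m) a) / b ^ m < 1"
    proof -
      have "t - (beta_T b ^^ m) a < b ^ m * (1 - a)" using ph t by simp
      hence "(t - (beta_T b ^^ m) a) / b ^ m < 1 - a" using bm by (simp add: divide_less_eq mult.commute)
      thus ?thesis by simp
    qed
    ultimately show ?thesis using n by (simp add: a_def m_def \<delta>_def)
  qed
  have E: "(beta_T b ^^ j) y = (beta_T b ^^ j) x + \<delta> / b ^ (n - j)" if "j \<le> n" for j
    using that
  proof (induction j)
    case 0 then show ?case by (simp add: y_def \<delta>_def)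
  next
    case (Suc j)
    have bj: "b * (\<delta> / b ^ (n - j)) = \<delta> / b ^ (n - Suc j)"
    proof -
      have "n - j = Suc (n - Suc j)" using Suc.prems by simp
      thus ?thesis using b by simp
    qed
    have "(beta_T b ^^ Suc j) y = frac (b * (beta_T b ^^ j) y)" by (simp add: beta_T_def)
    also have "b * (beta_T b ^^ j) y = of_int \<lfloor>b * (beta_T b ^^ j) x\<rfloor> + ((beta_T b ^^ Suc j) x + \<delta> / b ^ (n - Suc j))"
    proof -
      have "b * (beta_T b ^^ j) y = b * (beta_T b ^^ j) x + b * (\<delta> / b ^ (n - j))"
        using Suc by (simp add: distrib_left)
      moreover have "(beta_T b ^^ Suc j) x = b * (beta_T b ^^ j) x - of_int \<lfloor>b * (beta_T b ^^ j) x\<rfloor>"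
        using T_eq[of b "(beta_T b ^^ j) x"] by simp
      ultimately show ?thesis using bj by simp
    qed
    also have "frac \<dots> = (beta_T b ^^ Suc j) x + \<delta> / b ^ (n - Suc j)"
      using Q[OF Suc.prems] frac_shift by blast
    finally show ?case .
  qed
  show "0 \<le> y" "y < 1" using Q[of 0] E[of 0] by auto
  show "(beta_T b ^^ n) y = t" using E[of n] by (simp add: \<delta>_def)
  fix j assume j: "j < n"
  have bj: "b * (\<delta> / b ^ (n - j)) = \<delta> / b ^ (n - Suc j)"
  proof -
    have "n - j = Suc (n - Suc j)" using j by simp
    thus ?thesis using b by simp
  qed
  have "b * (beta_T b ^^ j) y = of_int \<lfloor>b * (beta_T b ^^ j) x\<rfloor> + ((beta_T b ^^ Suc j) x + \<delta> / b ^ (n - Suc j))"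
  proof -
    have "b * (beta_T b ^^ j) y = b * (beta_T b ^^ j) x + b * (\<delta> / b ^ (n - j))"
      using E[of j] j by (simp add: distrib_left)
    moreover have "(beta_T b ^^ Suc j) x = b * (beta_T b ^^ j) x - of_int \<lfloor>b * (beta_T b ^^ j) x\<rfloor>"
      using T_eq[of b "(beta_T b ^^ j) x"] by simp
    ultimately show ?thesis using bj by simp
  qed
  hence "\<lfloor>b * (beta_T b ^^ j) y\<rfloor> = \<lfloor>b * (beta_T b ^^ j) x\<rfloor>"
    using Q[of "Suc j"] j frac_shift by simp
  thus "greedy_digits b y j = greedy_digits b x j" by (simp add: greedy_digits_def)
qed

lemma zero_pref:
  fixes N :: nat
  assumes b: "b > 1" and y: "0 \<le> y" "y < 1"
  shows "\<And>k. k \<le> N \<Longrightarrow> (beta_T b ^^ k) (y / b ^ N) = y / b ^ (N - k)"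
proof -
  fix k assume "k \<le> N" thus "(beta_T b ^^ k) (y / b ^ N) = y / b ^ (N - k)"
  proof (induction k)
    case 0 then show ?case by simp
  next
    case (Suc k)
    have e: "N - k = Suc (N - Suc k)" using Suc.prems by simp
    have bk: "b * (y / b ^ (N - k)) = y / b ^ (N - Suc k)" unfolding e using b by simp
    have p: "b ^ (N - Suc k) \<ge> 1" using b by simp
    have r: "0 \<le> y / b ^ (N - Suc k)" "y / b ^ (N - Suc k) < 1"
      using y p by (auto simp: divide_less_eq)
    have "(beta_T b ^^ Suc k) (y / b ^ N) = beta_T b (y / b ^ (N - k))"
      using Suc by simp
    also have "\<dots> = frac (b * (y / b ^ (N - k)))" by (simp add: beta_T_def)
    also have "\<dots> = y / b ^ (N - Suc k)" unfolding bk using r frac_shift[of _ 0] by simp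
    finally show ?case .
  qed
qed

lemma zero_digits:
  fixes N :: nat
  assumes b: "b > 1" and y: "0 \<le> y" "y < 1" and k: "k < N"
  shows "greedy_digits b (y / b ^ N) k = 0"
proof -
  have e: "N - k = Suc (N - Suc k)" using k by simp
  have bk: "b * (y / b ^ (N - k)) = y / b ^ (N - Suc k)" unfolding e using b by simp
  have p: "b ^ (N - Suc k) \<ge> 1" using b by simp
  have r: "0 \<le> y / b ^ (N - Suc k)" "y / b ^ (N - Suc k) < 1"
    using y p by (auto simp: divide_less_eq)
  show ?thesis using zero_pref[OF b y, of k N] k bk r
    by (simp add: greedy_digits_def floor_eq_iff)
qed

lemma digit_shift: "greedy_digits b z (k + i) = greedy_digits b ((beta_T b ^^ k) z) i"
  by (simp add: greedy_digits_def funpow_add add.commute[of k i])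

definition realiz :: "real \<Rightarrow> nat list set" where
  "realiz b = {w. \<exists>x. 0 \<le> x \<and> x < 1 \<and> (\<forall>i<length w. greedy_digits b x i = w ! i)}"

lemma chain:
  fixes N :: nat
  assumes b: "b > 1" and eta: "\<And>j. (beta_T b ^^ j) 1 > 0 \<Longrightarrow> \<eta> \<le> (beta_T b ^^ j) 1"
    and bN: "1 \<le> \<eta> * b ^ N"
  shows "set ws \<subseteq> realiz b \<Longrightarrow> 0 \<le> t \<Longrightarrow> t < \<eta> \<Longrightarrow>
    \<exists>z. 0 \<le> z \<and> z < \<eta> \<and>
      (\<forall>i<length (concat (map (\<lambda>w. replicate N 0 @ w) ws)).
          greedy_digits b z i = concat (map (\<lambda>w. replicate N 0 @ w) ws) ! i) \<and>
      (beta_T b ^^ length (concat (map (\<lambda>w. replicate N 0 @ w) ws))) z = t"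
proof (induction ws arbitrary: t)
  case Nil then show ?case by auto
next
  case (Cons w ws)
  define C where "C = concat (map (\<lambda>w. replicate N 0 @ w) ws)"
  from Cons.IH[of t] Cons.prems obtain z1 where z1: "0 \<le> z1" "z1 < \<eta>"
    "\<forall>i<length C. greedy_digits b z1 i = C ! i" "(beta_T b ^^ length C) z1 = t"
    by (auto simp: C_def)
  from Cons.prems obtain x where x: "0 \<le> x" "x < 1" "\<forall>i<length w. greedy_digits b x i = w ! i"
    by (auto simp: realiz_def)
  define y where "y = x + (z1 - (beta_T b ^^ length w) x) / b ^ length w"
  have cy: "0 \<le> y" "y < 1" "\<And>j. j < length w \<Longrightarrow> greedy_digits b y j = greedy_digits b x j"
    "(beta_T b ^^ length w) y = z1"
    unfolding y_def using cyl[OF b eta x(1,2) z1(1,2)] by blast+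
  define z where "z = y / b ^ N"
  have TN: "(beta_T b ^^ N) z = y" using zero_pref[OF b cy(1,2), of N N] by (simp add: z_def)
  have bNpos: "b ^ N > 0" using b by simp
  have z0: "0 \<le> z" using cy(1) bNpos by (simp add: z_def)
  have zeta: "z < \<eta>"
  proof -
    have "z < 1 / b ^ N" using cy(2) bNpos by (simp add: z_def divide_strict_right_mono)
    also have "1 / b ^ N \<le> \<eta>" using bN bNpos by (simp add: divide_le_eq)
    finally show ?thesis .
  qed
  have Tw: "(beta_T b ^^ (N + length w)) z = z1"
    using TN cy(4) by (simp add: funpow_add add.commute[of N])
  have full: "concat (map (\<lambda>w. replicate N 0 @ w) (w # ws)) = replicate N 0 @ w @ C"
    by (simp add: C_def)
  show ?case unfolding full
  proof (intro exI[of _ z] conjI z0 zeta allI impI)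
    fix i assume i: "i < length (replicate N 0 @ w @ C)"
    show "greedy_digits b z i = (replicate N 0 @ w @ C) ! i"
    proof (cases "i < N")
      case True thus ?thesis using zero_digits[OF b cy(1,2) True] by (simp add: z_def nth_append)
    next
      case False
      then obtain r where r: "i = N + r" by (metis le_add_diff_inverse not_less)
      show ?thesis
      proof (cases "r < length w")
        case True
        have "greedy_digits b z i = greedy_digits b y r" unfolding r digit_shift TN ..
        also have "\<dots> = w ! r" using cy(3)[OF True] x(3) True by simp
        finally show ?thesis using True by (simp add: r nth_append)
      next
        case False
        then obtain s where s: "r = length w + s" by (metis le_add_diff_inverse not_less)
        have "greedy_digits b z i = greedy_digits b z1 s"
          unfolding r s add.assoc[symmetric] digit_shift Tw ..
        also have "\<dots> = C ! s" using z1(3) i r s by simp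
        finally show ?thesis by (simp add: r s nth_append)
      qed
    qed
  next
    have "(beta_T b ^^ length (replicate N 0 @ w @ C)) z = (beta_T b ^^ length C) ((beta_T b ^^ (N + length w)) z)"
    proof -
      have "length (replicate N 0 @ w @ C) = length C + (N + length w)" by simp
      thus ?thesis by (simp only: funpow_add comp_apply)
    qed
    thus "(beta_T b ^^ length (replicate N 0 @ w @ C)) z = t" using Tw z1(4) by simp
  qed
qed
lemma closure_cyl:
  fixes S :: "(nat \<Rightarrow> nat) set"
  shows "s \<in> closure S \<longleftrightarrow> (\<forall>k. \<exists>t\<in>S. \<forall>i<k. t i = s i)"
proof
  assume s: "s \<in> closure S"
  show "\<forall>k. \<exists>t\<in>S. \<forall>i<k. t i = s i"
  proof
    fix k
    define X where "X = (\<lambda>i. if i < k then {s i} else (UNIV::nat set))"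
    have "open (Pi\<^sub>E UNIV X)"
      by (rule open_PiE) (auto simp: X_def open_discrete)
    moreover have "s \<in> Pi\<^sub>E UNIV X" by (auto simp: X_def)
    ultimately have "Pi\<^sub>E UNIV X \<inter> S \<noteq> {}"
      using s open_Int_closure_eq_empty by blast
    then obtain t where "t \<in> S" "t \<in> Pi\<^sub>E UNIV X" by blast
    then show "\<exists>t\<in>S. \<forall>i<k. t i = s i"
      by (intro bexI[of _ t]) (auto simp: X_def PiE_iff split: if_splits)
  qed
next
  assume H: "\<forall>k. \<exists>t\<in>S. \<forall>i<k. t i = s i"
  show "s \<in> closure S"
    unfolding closure_iff_nhds_not_empty
  proof (intro allI impI)
    fix A U assume UA: "U \<subseteq> A" and U: "open U" and sU: "s \<in> U"
    have "openin (product_topology (\<lambda>i. euclidean) UNIV) U" using U open_fun_def by auto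
    from product_topology_open_contains_basis[OF this sU] obtain X where
      X: "s \<in> Pi\<^sub>E UNIV X" "finite {i. X i \<noteq> topspace euclidean}" "Pi\<^sub>E UNIV X \<subseteq> U"
      by auto
    obtain k where k: "\<forall>i\<in>{i. X i \<noteq> UNIV}. i < k"
    proof -
      have "finite {i. X i \<noteq> UNIV}" using X(2) by simp
      from finite_nat_bounded[OF this] obtain k where "{i. X i \<noteq> UNIV} \<subseteq> {..<k}" by blast
      thus ?thesis using that by blast
    qed
    obtain t where t: "t \<in> S" "\<forall>i<k. t i = s i" using H by blast
    have "t \<in> Pi\<^sub>E UNIV X"
    proof (auto simp: PiE_iff)
      fix i show "t i \<in> X i"
      proof (cases "i < k")
        case True thus ?thesis using t X(1) by (auto simp: PiE_iff)
      next
        case False thus ?thesis using k by auto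
      qed
    qed
    thus "S \<inter> A \<noteq> {}" using t X(3) UA by blast
  qed
qed

lemma words_realiz: assumes "w \<in> beta_words b" shows "w \<in> realiz b"
proof -
  from assms obtain s where s: "s \<in> beta_shift b" "\<forall>i<length w. s i = w ! i"
    by (auto simp: beta_words_def)
  from s(1) obtain t where "t \<in> greedy_digits b ` {0..<1}" "\<forall>i<length w. t i = s i"
    unfolding beta_shift_def closure_cyl by blast
  thus ?thesis using s(2) by (auto simp: realiz_def)
qed

lemma len_concat: "N * length L \<le> length (concat (map (\<lambda>i. replicate N 0 @ xs i) L))"
  by (induction L) auto

lemma main_dyn:
  assumes b: "b > 1" and etap: "\<eta> > 0" and eta: "\<And>j. (beta_T b ^^ j) 1 > 0 \<Longrightarrow> \<eta> \<le> (beta_T b ^^ j) 1"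
  shows "\<exists>N0::nat. \<forall>(xs :: nat \<Rightarrow> nat list) (N::nat).
           (\<forall>i. xs i \<in> beta_words b) \<longrightarrow> N > N0 \<longrightarrow> zero_sep_concat N xs \<in> beta_shift b"
proof -
  obtain N0 where N0: "1 / \<eta> < b ^ N0" using real_arch_pow[OF b] by blast
  have eta1: "\<eta> \<le> 1" using eta[of 0] by simp
  show ?thesis
  proof (intro exI[of _ N0] allI impI)
    fix xs :: "nat \<Rightarrow> nat list" and N :: nat
    assume xs: "\<forall>i. xs i \<in> beta_words b" and N: "N0 < N"
    have "b ^ N0 \<le> b ^ N" using N b by (intro power_increasing) auto
    hence "\<eta> * b ^ N0 \<le> \<eta> * b ^ N" using etap by simp
    moreover have "1 < \<eta> * b ^ N0" using N0 etap by (simp add: divide_less_eq mult.commute)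
    ultimately have bN: "1 \<le> \<eta> * b ^ N" by linarith
    have N1: "N \<ge> 1" using N by simp
    show "zero_sep_concat N xs \<in> beta_shift b"
      unfolding beta_shift_def closure_cyl
    proof
      fix k
      define L where "L = [0..<Suc k]"
      define C where "C = concat (map (\<lambda>i. replicate N 0 @ xs i) L)"
      have CC: "C = concat (map (\<lambda>w. replicate N 0 @ w) (map xs L))" by (simp add: C_def o_def)
      have "set (map xs L) \<subseteq> realiz b" using xs words_realiz by auto
      from chain[OF b eta bN this, of 0] etap obtain z where z: "0 \<le> z" "z < \<eta>"
        "\<forall>i<length C. greedy_digits b z i = C ! i" unfolding CC[symmetric] by auto
      show "\<exists>t\<in>greedy_digits b ` {0..<1}. \<forall>i<k. t i = zero_sep_concat N xs i"
      proof (intro bexI[of _ "greedy_digits b z"] allI impI)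
        show "greedy_digits b z \<in> greedy_digits b ` {0..<1}" using z eta1 by auto
        fix i assume i: "i < k"
        define L1 where "L1 = [0..<Suc i]"
        have LL: "L = L1 @ [Suc i..<Suc k]" using i unfolding L_def L1_def
          by (metis Suc_le_mono less_imp_le_nat upt_add_eq_append zero_le add_0 le_add_diff_inverse)
        have li: "i < length (concat (map (\<lambda>i. replicate N 0 @ xs i) L1))"
          using len_concat[of N L1 xs] N1 unfolding L1_def
          by (metis (no_types, lifting) length_upt less_le_trans lessI minus_nat.diff_0 mult_le_mono1 nat_mult_1)
        have iC: "i < length C" using li by (simp add: C_def LL)
        have "C ! i = zero_sep_concat N xs i"
          unfolding C_def LL zero_sep_concat_def L1_def[symmetric] using li by (simp add: nth_append)
        thus "greedy_digits b z i = zero_sep_concat N xs i" using z(3) iC by simp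
      qed
    qed
  qed
qed



lemma irr_sf: assumes irr: "irreducible (p::'a::idom poly)" shows "square_free p"
proof(intro square_freeI)
  from irr show p0: "p \<noteq> 0" by auto
  fix a assume "a * a dvd p"
  then obtain b where paab: "p = a * (a * b)" by (elim dvdE, auto)
  assume "degree a > 0"
  then have a1: "\<not> a dvd 1" by (auto simp: poly_dvd_1)
  then have ab1: "\<not> a * b dvd 1" using dvd_mult_left by auto
  from paab irr a1 ab1 show False by force
qed

lemma rsq: assumes "irreducible (p::int poly)" shows "rsquarefree (map_poly (of_int :: int \<Rightarrow> complex) p)"
proof -
  interpret h: field_hom_0' "of_rat :: rat \<Rightarrow> complex" by unfold_locales auto
  have "square_free (map_poly rat_of_int p)" using square_free_int_rat irr_sf assms by blast
  hence "square_free (map_poly (of_rat :: rat \<Rightarrow> complex) (map_poly rat_of_int p))"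
    by (simp add: h.square_free_map_poly)
  also have "map_poly (of_rat :: rat \<Rightarrow> complex) (map_poly rat_of_int p) = map_poly of_int p"
    by (subst map_poly_map_poly) (auto simp: o_def)
  finally show ?thesis by (rule square_free_rsquarefree)
qed

lemma orbit_01: assumes "b > 1" shows "0 \<le> (beta_T b ^^ j) 1" "(beta_T b ^^ j) 1 \<le> 1"
  by (cases j; simp add: T_range less_imp_le)+

fun Wc :: "real \<Rightarrow> complex \<Rightarrow> nat \<Rightarrow> complex" where
  "Wc b z 0 = 1"
| "Wc b z (Suc j) = z * Wc b z j - of_int \<lfloor>b * (beta_T b ^^ j) 1\<rfloor>"

lemma Wc_real: "Wc b (of_real b) j = of_real ((beta_T b ^^ j) 1)"
proof (induction j)
  case 0 then show ?case by simp
next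
  case (Suc j)
  have "(beta_T b ^^ Suc j) 1 = b * (beta_T b ^^ j) 1 - of_int \<lfloor>b * (beta_T b ^^ j) 1\<rfloor>"
    using T_eq[of b "(beta_T b ^^ j) 1"] by simp
  thus ?case using Suc by simp
qed

lemma digit_bound: assumes "b > 1" shows "cmod (of_int \<lfloor>b * (beta_T b ^^ j) 1\<rfloor> :: complex) \<le> b"
proof -
  have r: "0 \<le> (beta_T b ^^ j) 1" "(beta_T b ^^ j) 1 \<le> 1" using orbit_01 assms by auto
  have "0 \<le> b * (beta_T b ^^ j) 1" using r assms by simp
  hence f0: "0 \<le> \<lfloor>b * (beta_T b ^^ j) 1\<rfloor>" by simp
  have "b * (beta_T b ^^ j) 1 \<le> b" using r assms by (simp add: mult_left_le)
  hence "real_of_int \<lfloor>b * (beta_T b ^^ j) 1\<rfloor> \<le> b" by linarith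
  thus ?thesis using f0 by (simp add: norm_of_int)
qed

lemma Wc_bound: assumes b: "b > 1" and z: "cmod z < 1"
  shows "cmod (Wc b z j) \<le> 1 + b / (1 - cmod z)"
proof (induction j)
  case 0 then show ?case using b z by simp
next
  case (Suc j)
  define M where "M = 1 + b / (1 - cmod z)"
  have eqM: "(1 - cmod z) * M = (1 - cmod z) + b" using z by (simp add: M_def field_simps)
  have "cmod (Wc b z (Suc j)) \<le> cmod z * cmod (Wc b z j) + b"
    using digit_bound[OF b, of j] norm_triangle_ineq4[of "z * Wc b z j" "of_int \<lfloor>b * (beta_T b ^^ j) 1\<rfloor>"]
    by (simp add: norm_mult)
  also have "\<dots> \<le> cmod z * M + b" using Suc by (simp add: M_def mult_left_mono)
  also have "\<dots> \<le> M" using eqM z by (simp add: algebra_simps)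
  finally show ?case by (simp add: M_def)
qed

lemma reduce:
  fixes p :: "int poly"
  assumes lc: "lead_coeff p = 1" and d: "degree p \<ge> 1"
  shows "\<exists>q::int poly. degree q < degree p \<and>
     (\<forall>z. poly (map_poly of_int p) z = 0 \<longrightarrow> poly (map_poly of_int q) z = Wc b z j)"
proof (induction j)
  case 0
  show ?case by (intro exI[of _ 1]) (use d in auto)
next
  case (Suc j)
  then obtain q where q: "degree q < degree p"
    "\<forall>z. poly (map_poly of_int p) z = 0 \<longrightarrow> poly (map_poly of_int q) z = Wc b z j" by blast
  define e where "e = \<lfloor>b * (beta_T b ^^ j) 1\<rfloor>"
  define q1 where "q1 = pCons 0 q - [:e:]"
  define c where "c = poly.coeff q1 (degree p)"
  define q2 where "q2 = q1 - Polynomial.smult c p"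
  have dq1: "degree q1 \<le> degree p"
  proof -
    have "degree (pCons 0 q) \<le> degree p" using q(1) by (cases "q = 0") auto
    moreover have "degree [:e:] \<le> degree p" by simp
    ultimately show ?thesis unfolding q1_def using degree_diff_le by blast
  qed
  have dq2: "degree q2 \<le> degree p" unfolding q2_def
    using dq1 degree_diff_le degree_smult_le by (metis order.trans)
  have cq2: "poly.coeff q2 (degree p) = 0" using lc by (simp add: q2_def c_def)
  have "degree q2 < degree p"
  proof (rule ccontr)
    assume "\<not> degree q2 < degree p"
    hence "degree q2 = degree p" using dq2 by simp
    hence "q2 = 0" using cq2 by (metis leading_coeff_0_iff)
    thus False using \<open>degree q2 = degree p\<close> d by simp
  qed
  moreover have "poly (map_poly of_int q2) z = Wc b z (Suc j)" if "poly (map_poly of_int p) z = 0" for z :: complex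
    using q(2) that by (simp add: q2_def q1_def hom_distribs e_def)
  ultimately show ?case by blast
qed

lemma lagrange_bound:
  fixes Z :: "complex set"
  assumes fin: "finite Z" and M: "M \<ge> 0"
  shows "\<exists>C. \<forall>q::int poly. degree q < card Z \<longrightarrow> (\<forall>z\<in>Z. cmod (poly (map_poly of_int q) z) \<le> M)
           \<longrightarrow> (\<forall>i. \<bar>real_of_int (poly.coeff q i)\<bar> \<le> C)"
proof -
  define L where "L z = Polynomial.smult (1 / (\<Prod>w\<in>Z-{z}. (z - w))) (\<Prod>w\<in>Z-{z}. [:-w,1:])" for z
  have dL: "degree (L z) \<le> card Z - 1" if "z \<in> Z" for z
  proof -
    have "degree (L z) \<le> degree (\<Prod>w\<in>Z-{z}. [:-w,1:])" unfolding L_def by (rule degree_smult_le)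
    also have "\<dots> \<le> sum (degree \<circ> (\<lambda>w. [:-w,1:])) (Z - {z})" using fin by (intro degree_prod_sum_le) auto
    also have "\<dots> = card (Z - {z})" by simp
    also have "\<dots> = card Z - 1" using that fin by simp
    finally show ?thesis .
  qed
  have pL: "poly (L z) u = (if u = z then 1 else 0)" if "z \<in> Z" "u \<in> Z" for z u
  proof (cases "u = z")
    case True
    have "(\<Prod>w\<in>Z-{z}. (z - w)) \<noteq> 0" using fin by (auto simp: prod_zero_iff)
    thus ?thesis using True by (simp add: L_def poly_prod)
  next
    case False
    have "(\<Prod>w\<in>Z-{z}. poly [:-w,1:] u) = 0" using fin False that
      by (subst prod_zero_iff) auto
    thus ?thesis using False by (simp add: L_def poly_prod)
  qed
  have interp: "map_poly of_int q = (\<Sum>z\<in>Z. Polynomial.smult (poly (map_poly of_int q) z) (L z))"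
    if dq: "degree q < card Z" for q :: "int poly"
  proof (rule ccontr)
    define D where "D = map_poly (of_int :: int \<Rightarrow> complex) q - (\<Sum>z\<in>Z. Polynomial.smult (poly (map_poly of_int q) z) (L z))"
    assume "\<not> ?thesis"
    hence D0: "D \<noteq> 0" by (simp add: D_def)
    have "degree D \<le> card Z - 1" unfolding D_def
    proof (rule degree_diff_le)
      show "degree (map_poly (of_int :: int \<Rightarrow> complex) q) \<le> card Z - 1" using dq by simp
      show "degree (\<Sum>z\<in>Z. Polynomial.smult (poly (map_poly of_int q) z) (L z)) \<le> card Z - 1"
        using fin dL by (intro degree_sum_le) (auto intro: order.trans[OF degree_smult_le])
    qed
    moreover have "card Z \<le> degree D"
    proof -
      have "Z \<subseteq> {x. poly D x = 0}"
      proof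
        fix u assume u: "u \<in> Z"
        have "(\<Sum>z\<in>Z. poly (map_poly (of_int :: int \<Rightarrow> complex) q) z * poly (L z) u)
             = (\<Sum>z\<in>Z. if z = u then poly (map_poly of_int q) z else 0)"
          using pL u by (intro sum.cong) auto
        also have "\<dots> = poly (map_poly of_int q) u" using fin u by simp
        finally show "u \<in> {x. poly D x = 0}" by (simp add: D_def poly_sum)
      qed
      hence "card Z \<le> card {x. poly D x = 0}" using D0 by (intro card_mono poly_roots_finite)
      also have "\<dots> \<le> degree D" using D0 by (rule card_poly_roots_bound)
      finally show ?thesis .
    qed
    ultimately show False using dq by linarith
  qed
  define C where "C = M * (\<Sum>i<card Z. \<Sum>z\<in>Z. cmod (poly.coeff (L z) i))"
  have C0: "C \<ge> 0" using M by (simp add: C_def sum_nonneg)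
  show ?thesis
  proof (intro exI[of _ C] allI impI)
    fix q :: "int poly" and i
    assume dq: "degree q < card Z" and bd: "\<forall>z\<in>Z. cmod (poly (map_poly of_int q) z) \<le> M"
    show "\<bar>real_of_int (poly.coeff q i)\<bar> \<le> C"
    proof (cases "i < card Z")
      case False
      hence "poly.coeff q i = 0" using dq by (intro coeff_eq_0) simp
      thus ?thesis using C0 by simp
    next
      case True
      have "(complex_of_int (poly.coeff q i)) = poly.coeff (map_poly of_int q) i" by simp
      also have "\<dots> = (\<Sum>z\<in>Z. poly (map_poly of_int q) z * poly.coeff (L z) i)"
        by (subst interp[OF dq]) (simp add: coeff_sum)
      finally have eq: "complex_of_int (poly.coeff q i) = (\<Sum>z\<in>Z. poly (map_poly of_int q) z * poly.coeff (L z) i)" .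
      have "\<bar>real_of_int (poly.coeff q i)\<bar> = cmod (complex_of_int (poly.coeff q i))" by (simp only: norm_of_int)
      also have "\<dots> \<le> (\<Sum>z\<in>Z. cmod (poly (map_poly of_int q) z * poly.coeff (L z) i))"
        unfolding eq by (rule norm_sum)
      also have "\<dots> \<le> (\<Sum>z\<in>Z. M * cmod (poly.coeff (L z) i))"
        using bd by (intro sum_mono) (auto simp: norm_mult intro: mult_right_mono)
      also have "\<dots> = M * (\<Sum>z\<in>Z. cmod (poly.coeff (L z) i))" by (simp add: sum_distrib_left)
      also have "\<dots> \<le> C" unfolding C_def using M True
        by (intro mult_left_mono member_le_sum) (auto intro: sum_nonneg)
      finally show ?thesis .
    qed
  qed
qed

lemma finite_bounded_polys:
  "finite {q::int poly. degree q < d \<and> (\<forall>i. \<bar>real_of_int (poly.coeff q i)\<bar> \<le> C)}"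
proof -
  define A where "A = {-\<lceil>C\<rceil>..\<lceil>C\<rceil>}"
  have "{q::int poly. degree q < d \<and> (\<forall>i. \<bar>real_of_int (poly.coeff q i)\<bar> \<le> C)}
        \<subseteq> Poly ` {xs. set xs \<subseteq> A \<and> length xs \<le> d}"
  proof
    fix q :: "int poly" assume q: "q \<in> {q. degree q < d \<and> (\<forall>i. \<bar>real_of_int (poly.coeff q i)\<bar> \<le> C)}"
    have "set (coeffs q) \<subseteq> A"
    proof
      fix x assume "x \<in> set (coeffs q)"
      then obtain i where "x = poly.coeff q i" by (auto simp: coeffs_def split: if_splits)
      moreover have "\<bar>real_of_int (poly.coeff q i)\<bar> \<le> C" using q by auto
      ultimately show "x \<in> A" unfolding A_def by (auto simp: abs_le_iff) linarith+
    qed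
    moreover have "length (coeffs q) \<le> d" using q by (cases "q = 0") (auto simp: length_coeffs)
    ultimately show "q \<in> Poly ` {xs. set xs \<subseteq> A \<and> length xs \<le> d}"
      by (intro image_eqI[of _ _ "coeffs q"]) auto
  qed
  moreover have "finite {xs. set xs \<subseteq> A \<and> length xs \<le> d}" unfolding A_def
    by (intro finite_lists_length_le) auto
  ultimately show ?thesis using finite_subset by blast
qed

lemma pisot_eta:
  assumes "pisot b"
  shows "\<exists>\<eta>>0. \<forall>j. (beta_T b ^^ j) 1 > 0 \<longrightarrow> \<eta> \<le> (beta_T b ^^ j) 1"
proof -
  from assms obtain p :: "int poly" where b: "b > 1" and lc: "lead_coeff p = 1" and irr: "irreducible p"
    and root: "poly (map_poly of_int p) b = 0"
    and conj: "\<forall>z::complex. poly (map_poly of_int p) z = 0 \<and> z \<noteq> complex_of_real b \<longrightarrow> cmod z < 1"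
    unfolding pisot_def by blast
  define Pc where "Pc = map_poly (of_int :: int \<Rightarrow> complex) p"
  define Z where "Z = {z. poly Pc z = 0}"
  have p0: "p \<noteq> 0" using lc by auto
  have Pc0: "Pc \<noteq> 0" using p0 by (simp add: Pc_def)
  have finZ: "finite Z" unfolding Z_def using Pc0 by (rule poly_roots_finite)
  have rs: "rsquarefree Pc" unfolding Pc_def using irr by (rule rsq)
  have lcPc: "lead_coeff Pc = 1" using lc by (simp add: Pc_def)
  have dPc: "degree Pc = degree p" by (simp add: Pc_def)
  have cardZ: "card Z = degree p"
  proof -
    have "Pc = (\<Prod>z\<in>Z. [:-z, 1:])" using complex_poly_decompose_rsquarefree[OF rs] lcPc
      by (simp add: Z_def)
    moreover have "degree (\<Prod>z\<in>Z. [:-z, 1:]) = (\<Sum>z\<in>Z. degree [:-z, 1:])"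
      by (rule degree_prod_sum_eq) simp
    ultimately have "degree Pc = (\<Sum>z\<in>Z. degree [:-z, 1:])" by simp
    thus ?thesis using dPc by simp
  qed
  have d1: "degree p \<ge> 1"
  proof (rule ccontr)
    assume "\<not> degree p \<ge> 1"
    hence d0: "degree p = 0" by simp
    have "p = [:1:]"
    proof (rule poly_eqI)
      fix n show "poly.coeff p n = poly.coeff [:1:] n"
      proof (cases n)
        case 0 thus ?thesis using lc d0 by simp
      next
        case (Suc m) thus ?thesis using d0 by (simp add: coeff_eq_0)
      qed
    qed
    thus False using root by simp
  qed
  have bZ: "complex_of_real b \<in> Z"
  proof -
    have "Pc = map_poly of_real (map_poly (of_int :: int \<Rightarrow> real) p)"
      by (simp add: Pc_def map_poly_map_poly o_def)
    hence "poly Pc (of_real b) = of_real (poly (map_poly (of_int :: int \<Rightarrow> real) p) b)"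
      by (simp add: of_real_hom.poly_map_poly)
    thus ?thesis using root by (simp add: Z_def)
  qed
  define Mz where "Mz z = (if z = complex_of_real b then 1 else 1 + b / (1 - cmod z))" for z
  define M where "M = (\<Sum>z\<in>Z. Mz z)"
  have Mz0: "Mz z \<ge> 0" if "z \<in> Z" for z
  proof (cases "z = complex_of_real b")
    case False
    hence "cmod z < 1" using conj that by (auto simp: Z_def Pc_def)
    thus ?thesis using b False by (simp add: Mz_def)
  qed (simp add: Mz_def)
  have M0: "M \<ge> 0" unfolding M_def using Mz0 by (intro sum_nonneg) auto
  have WM: "cmod (Wc b z j) \<le> M" if "z \<in> Z" for z j
  proof -
    have "cmod (Wc b z j) \<le> Mz z"
    proof (cases "z = complex_of_real b")
      case True
      thus ?thesis using orbit_01[OF b, of j] by (simp add: Mz_def Wc_real)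
    next
      case False
      hence "cmod z < 1" using conj that by (auto simp: Z_def Pc_def)
      thus ?thesis using Wc_bound[OF b] False by (simp add: Mz_def)
    qed
    also have "\<dots> \<le> M" unfolding M_def using finZ that Mz0 by (intro member_le_sum) auto
    finally show ?thesis .
  qed
  obtain C where C: "\<forall>q::int poly. degree q < card Z \<longrightarrow> (\<forall>z\<in>Z. cmod (poly (map_poly of_int q) z) \<le> M)
           \<longrightarrow> (\<forall>i. \<bar>real_of_int (poly.coeff q i)\<bar> \<le> C)"
    using lagrange_bound[OF finZ M0] by blast
  define S where "S = {q::int poly. degree q < degree p \<and> (\<forall>i. \<bar>real_of_int (poly.coeff q i)\<bar> \<le> C)}"
  have finS: "finite S" unfolding S_def by (rule finite_bounded_polys)
  define r where "r j = (beta_T b ^^ j) 1" for j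
  have sub: "range r \<subseteq> (\<lambda>q. Re (poly (map_poly of_int q) (complex_of_real b))) ` S"
  proof
    fix x assume "x \<in> range r"
    then obtain j where x: "x = r j" by blast
    obtain q :: "int poly" where q: "degree q < degree p"
      "\<forall>z. poly (map_poly of_int p) z = 0 \<longrightarrow> poly (map_poly of_int q) z = Wc b z j"
      using reduce[OF lc d1] by blast
    have qZ: "\<forall>z\<in>Z. poly (map_poly of_int q) z = Wc b z j" using q(2) by (auto simp: Z_def Pc_def)
    have qM: "\<forall>z\<in>Z. cmod (poly (map_poly of_int q) z) \<le> M" using qZ WM by simp
    have "degree q < card Z" using q(1) cardZ by simp
    hence "\<forall>i. \<bar>real_of_int (poly.coeff q i)\<bar> \<le> C" using C qM by blast
    hence "q \<in> S" unfolding S_def using q(1) by blast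
    moreover have "x = Re (poly (map_poly of_int q) (complex_of_real b))"
      using qZ bZ by (simp add: x r_def Wc_real)
    ultimately show "x \<in> (\<lambda>q. Re (poly (map_poly of_int q) (complex_of_real b))) ` S" by blast
  qed
  have fin: "finite (range r)" using finite_subset[OF sub] finS by blast
  define Os where "Os = {x \<in> range r. 0 < x}"
  have finO: "finite Os" using fin by (simp add: Os_def)
  have 1: "1 \<in> Os" unfolding Os_def by (auto simp: r_def intro: range_eqI[of _ _ 0])
  show ?thesis
  proof (intro exI[of _ "Min Os"] conjI allI impI)
    have "Min Os \<in> Os" using Min_in[OF finO] 1 by blast
    thus "0 < Min Os" by (simp add: Os_def)
    fix j assume "0 < (beta_T b ^^ j) 1"
    hence "(beta_T b ^^ j) 1 \<in> Os" by (auto simp: Os_def r_def)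
    thus "Min Os \<le> (beta_T b ^^ j) 1" using finO by simp
  qed
qed

theorem lemma6p1:
  fixes \<beta> :: real
  assumes "pisot \<beta>"
  shows "\<exists>N0::nat. \<forall>(xs :: nat \<Rightarrow> nat list) (N::nat).
           (\<forall>i. xs i \<in> beta_words \<beta>) \<longrightarrow> N > N0 \<longrightarrow> zero_sep_concat N xs \<in> beta_shift \<beta>"
proof -
  have b: "\<beta> > 1" using assms by (simp add: pisot_def)
  from pisot_eta[OF assms] obtain \<eta> where "\<eta> > 0" "\<forall>j. (beta_T \<beta> ^^ j) 1 > 0 \<longrightarrow> \<eta> \<le> (beta_T \<beta> ^^ j) 1"
    by blast
  thus ?thesis using main_dyn[OF b] by blast
qed


end
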